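(* Let $\Gamma<\mathrm{PSL}_2(\mathbb{C})$ be discrete, co-compact and torsion-free, $f:\mathbb{R}/2\pi\mathbb{Z}\to\mathbb{R}$ smooth with $\hat f(0)=0$, $T>0$ and $0<\eta\le\eta_0$. Then (1) the distribution $\mu_{T,f,\eta}$ has mean $b_{f,\eta}$; (2) $\mu_{T,f,\eta}$ is compactly supported on the interval \[\Big[b_{f,\eta}-2\sum_{|s|,|p|<T}m_\Gamma(\pi_{is,p})|\hat f(-p)||c_{s,\eta}|,\ b_{f,\eta}+2\sum_{|s|,|p|<T}m_\Gamma(\pi_{is,p})|\hat f(-p)||c_{s,\eta}|\Big]\] \[\subset\Big[b_{f,\eta}-2\sum_{s,p}m_\Gamma(\pi_{is,p})|\hat f(-p)||c_{s,\eta}|,\ b_{f,\eta}+2\sum_{s,p}m_\Gamma(\pi_{is,p})|\hat f(-p)||c_{s,\eta}|\Big],\] the sums running over principal series representations $\pi_{is,p}$ occurring in $L^2(\Gamma\backslash G)$.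
   Context: $G=\mathrm{PSL}_2(\mathbb{C})$. $\pi_{is,p}$ ($s\in\mathbb{R},p\in\mathbb{Z}$) is the unitary principal series representation induced from $\begin{pmatrix}e^{(u+i\theta)/2}&*\\0&e^{-(u+i\theta)/2}\end{pmatrix}\mapsto e^{ius+ip\theta}$; $m_\Gamma(\pi)$ is the multiplicity in $L^2(\Gamma\backslash G)$. $\hat f(p)=\frac1{2\pi}\int_0^{2\pi}f(\theta)e^{-ip\theta}d\theta$. Fix smooth even nonnegative $\psi$ supported in $[-1,1]$, $\int\psi=1$; $\psi_\eta(t)=\eta^{-1}\psi(t/\eta)$; $c_{s,\eta}=\int\psi_\eta(t)\frac{e^{t(1+is)}}{1+is}dt$; $b_{f,\eta}=\big(\sum_{p\ne0}m_\Gamma(\pi_{0,p})\mathrm{Re}\,\hat f(p)-2\mathrm{Re}\,\hat f(1)\big)2c_{0,\eta}$. Let $(s_1,p_1),\dots,(s_n,p_n)$ be the distinct pairs with $s_j\ne0$, $|s_j|,|p_j|<T$, $m_\Gamma(\pi_{is_j,p_j})\neq0$; $w_T(x)=2\sum_{j=1}^nm_\Gamma(\pi_{is_j,p_j})\mathrm{Re}\big(\hat f(-p_j)e^{2\pi ix_j}c_{s_j,\eta}\big)+b_{f,\eta}$ on $\mathbb{T}^n=\mathbb{R}^n/\mathbb{Z}^n$; $A$ is the closure of $\{(s_jy/2\pi)_j:y\in\mathbb{R}\}$ in $\mathbb{T}^n$ with Haar probability measure; $\mu_{T,f,\eta}$ is the pushforward of this Haar measure under $w_T|_A$. Equivalently,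 $\int h\,d\mu_{T,f,\eta}=\lim_{Y\to\infty}\frac1Y\int_{\eta_0}^Yh(E^{(T)}[f,g_{y,\eta}])dy$ for continuous $h$, where $E^{(T)}[f,g_{y,\eta}]=2\sum_{j}m_\Gamma(\pi_{is_j,p_j})\mathrm{Re}(\hat f(-p_j)e^{is_jy}c_{s_j,\eta})+b_{f,\eta}$. *)

theory Defs
  imports "HOL-Analysis.Analysis" "HOL-Probability.Probability"
begin

definition fhat :: "(real \<Rightarrow> real) \<Rightarrow> int \<Rightarrow> complex" where
  "fhat f p = integral {0..2*pi} (\<lambda>\<theta>. complex_of_real (f \<theta>) * exp (- \<i> * of_int p * of_real \<theta>))
              / complex_of_real (2*pi)"

definition psi_eta :: "(real \<Rightarrow> real) \<Rightarrow> real \<Rightarrow> real \<Rightarrow> real" where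
  "psi_eta psi eta t = psi (t / eta) / eta"

definition c_se :: "(real \<Rightarrow> real) \<Rightarrow> real \<Rightarrow> real \<Rightarrow> complex" where
  "c_se psi s eta = integral UNIV (\<lambda>t. complex_of_real (psi_eta psi eta t)
        * exp (complex_of_real t * (1 + \<i> * complex_of_real s)) / (1 + \<i> * complex_of_real s))"

text \<open>Multiplicities are given by m s p = m_Gamma(pi_{is,p}).
  b_{f,eta} = (sum_{p<>0} m(0,p) Re fhat(p) - 2 Re fhat(1)) * 2 c_{0,eta}
  (c_{0,eta} is real; we take its real part).\<close>
definition b_fe :: "(real \<Rightarrow> int \<Rightarrow> nat) \<Rightarrow> (real \<Rightarrow> real) \<Rightarrow> (real \<Rightarrow> real) \<Rightarrow> real \<Rightarrow> real" where
  "b_fe m psi f eta =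
     ((\<Sum>\<^sub>\<infinity>p\<in>{p::int. p \<noteq> 0}. real (m 0 p) * Re (fhat f p)) - 2 * Re (fhat f 1))
     * 2 * Re (c_se psi 0 eta)"

definition pairs_T :: "(real \<Rightarrow> int \<Rightarrow> nat) \<Rightarrow> real \<Rightarrow> (real \<times> int) set" where
  "pairs_T m T = {(s,p). s \<noteq> 0 \<and> \<bar>s\<bar> < T \<and> \<bar>real_of_int p\<bar> < T \<and> m s p \<noteq> 0}"

definition E_T :: "(real \<Rightarrow> int \<Rightarrow> nat) \<Rightarrow> (real \<Rightarrow> real) \<Rightarrow> (real \<Rightarrow> real) \<Rightarrow> real \<Rightarrow> real \<Rightarrow> real \<Rightarrow> real" where
  "E_T m psi f T eta y =
     2 * (\<Sum>(s,p)\<in>pairs_T m T. real (m s p) *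
            Re (fhat f (- p) * exp (\<i> * complex_of_real (s * y)) * c_se psi s eta))
     + b_fe m psi f eta"

definition rad_T :: "(real \<Rightarrow> int \<Rightarrow> nat) \<Rightarrow> (real \<Rightarrow> real) \<Rightarrow> (real \<Rightarrow> real) \<Rightarrow> real \<Rightarrow> real \<Rightarrow> real" where
  "rad_T m psi f T eta =
     2 * (\<Sum>(s,p)\<in>{(s,p). \<bar>s\<bar> < T \<and> \<bar>real_of_int p\<bar> < T \<and> m s p \<noteq> 0}.
            real (m s p) * cmod (fhat f (- p)) * cmod (c_se psi s eta))"

definition rad_all :: "(real \<Rightarrow> int \<Rightarrow> nat) \<Rightarrow> (real \<Rightarrow> real) \<Rightarrow> (real \<Rightarrow> real) \<Rightarrow> real \<Rightarrow> ennreal" where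
  "rad_all m psi f eta =
     2 * (\<Sum>\<^sub>\<infinity>(s,p)\<in>{(s,p). m s p \<noteq> 0}.
            ennreal (real (m s p) * cmod (fhat f (- p)) * cmod (c_se psi s eta)))"

end

theory Submission
  imports Defs "HOL-Real_Asymp.Real_Asymp"
begin

lemma Re_exp_term: "Re (A * exp (\<i> * complex_of_real t)) = Re A * cos t - Im A * sin t"
  by (simp add: Re_exp Im_exp)

lemma term_int:
  fixes A :: complex and s a b :: real
  assumes "s \<noteq> 0" "a \<le> b"
  shows "((\<lambda>y. Re (A * exp (\<i> * complex_of_real (s*y)))) has_integral
     ((Re A * sin (s*b) + Im A * cos (s*b))/s - (Re A * sin (s*a) + Im A * cos (s*a))/s)) {a..b}"
proof -
  have "((\<lambda>y. (Re A * sin (s*y) + Im A * cos (s*y))/s) has_real_derivative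
        Re (A * exp (\<i> * complex_of_real (s*y)))) (at y within {a..b})" for y
    unfolding Re_exp_term
    by (rule derivative_eq_intros refl | simp add: assms field_simps)+
  then show ?thesis
    by (intro fundamental_theorem_of_calculus[OF assms(2)])
       (auto simp: has_real_derivative_iff_has_vector_derivative)
qed

theorem corollary4p2:
  fixes m :: "real \<Rightarrow> int \<Rightarrow> nat"
    and f psi :: "real \<Rightarrow> real"
    and T eta eta0 :: real
    and \<mu> :: "real measure"
  assumes m_locfin: "\<And>R. finite {(s,p). \<bar>s\<bar> < R \<and> \<bar>real_of_int p\<bar> < R \<and> m s p \<noteq> 0}"
    and psi_smooth: "\<And>k. (deriv ^^ k) psi differentiable_on UNIV"
    and psi_even: "\<And>t. psi (- t) = psi t"
    and psi_nonneg: "\<And>t. psi t \<ge> 0"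
    and psi_supp: "\<And>t. \<bar>t\<bar> > 1 \<Longrightarrow> psi t = 0"
    and psi_int: "(psi has_integral 1) UNIV"
    and f_periodic: "\<And>x. f (x + 2 * pi) = f x"
    and f_smooth: "\<And>k. (deriv ^^ k) f differentiable_on UNIV"
    and f_mean0: "fhat f 0 = 0"
    and T_pos: "T > 0"
    and eta0_pos: "eta0 > 0"
    and eta_pos: "0 < eta" and eta_le: "eta \<le> eta0"
    and mu_prob: "prob_space \<mu>"
    and mu_borel: "sets \<mu> = sets borel"
    and mu_def: "\<And>h. continuous_on UNIV h \<Longrightarrow>
        ((\<lambda>Y. (1 / Y) * integral {eta0..Y} (\<lambda>y. h (E_T m psi f T eta y)))
           \<longlongrightarrow> integral\<^sup>L \<mu> h) at_top"
  shows "(integrable \<mu> (\<lambda>x. x) \<and> integral\<^sup>L \<mu> (\<lambda>x. x) = b_fe m psi f eta)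
       \<and> (AE x in \<mu>. x \<in> {b_fe m psi f eta - rad_T m psi f T eta .. b_fe m psi f eta + rad_T m psi f T eta})
       \<and> (\<forall>x \<in> {b_fe m psi f eta - rad_T m psi f T eta .. b_fe m psi f eta + rad_T m psi f T eta}.
           ereal (b_fe m psi f eta) - enn2ereal (rad_all m psi f eta) \<le> ereal x
         \<and> ereal x \<le> ereal (b_fe m psi f eta) + enn2ereal (rad_all m psi f eta))"
proof -
  define b where "b = b_fe m psi f eta"
  define R where "R = rad_T m psi f T eta"
  define S where "S = pairs_T m T"
  define Q where "Q = {(s,p). \<bar>s\<bar> < T \<and> \<bar>real_of_int p\<bar> < T \<and> m s p \<noteq> 0}"
  define A where "A = (\<lambda>q::real\<times>int. fhat f (- snd q) * c_se psi (fst q) eta)"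
  define E where "E = E_T m psi f T eta"
  define w where "w = (\<lambda>q::real\<times>int. real (m (fst q) (snd q)) * cmod (fhat f (- snd q)) * cmod (c_se psi (fst q) eta))"
  have finQ: "finite Q" using m_locfin[of T] unfolding Q_def .
  have SQ: "S \<subseteq> Q" unfolding S_def Q_def pairs_T_def by auto
  have finS: "finite S" using finQ SQ finite_subset by blast
  have S0: "fst q \<noteq> 0" if "q \<in> S" for q using that unfolding S_def pairs_T_def by auto
  have Req: "R = 2 * (\<Sum>q\<in>Q. w q)" unfolding R_def rad_T_def Q_def w_def by (simp add: split_def)
  have wnn: "w q \<ge> 0" for q unfolding w_def by simp
  have Rnn: "R \<ge> 0" unfolding Req using wnn by (simp add: sum_nonneg)
  have Eeq: "E y = 2 * (\<Sum>q\<in>S. real (m (fst q) (snd q)) * Re (A q * exp (\<i> * complex_of_real (fst q * y)))) + b" for y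
    unfolding E_def E_T_def S_def A_def b_def by (simp add: split_def mult_ac)
  have bound: "\<bar>E y - b\<bar> \<le> R" for y
  proof -
    have "\<bar>\<Sum>q\<in>S. real (m (fst q) (snd q)) * Re (A q * exp (\<i> * complex_of_real (fst q * y)))\<bar>
        \<le> (\<Sum>q\<in>S. \<bar>real (m (fst q) (snd q)) * Re (A q * exp (\<i> * complex_of_real (fst q * y)))\<bar>)"
      by (rule sum_abs)
    also have "\<dots> \<le> (\<Sum>q\<in>S. w q)"
    proof (rule sum_mono)
      fix q assume "q \<in> S"
      have "\<bar>Re (A q * exp (\<i> * complex_of_real (fst q * y)))\<bar> \<le> cmod (A q * exp (\<i> * complex_of_real (fst q * y)))"
        by (rule abs_Re_le_cmod)
      also have "\<dots> = cmod (fhat f (- snd q)) * cmod (c_se psi (fst q) eta)"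
        unfolding A_def by (simp add: norm_mult)
      finally show "\<bar>real (m (fst q) (snd q)) * Re (A q * exp (\<i> * complex_of_real (fst q * y)))\<bar> \<le> w q"
        unfolding w_def by (simp add: abs_mult mult.assoc mult_left_mono)
    qed
    also have "\<dots> \<le> (\<Sum>q\<in>Q. w q)" by (rule sum_mono2[OF finQ SQ]) (use wnn in auto)
    finally show ?thesis unfolding Eeq Req by simp
  qed
  define I where "I = {b - R .. b + R}"
  have EI: "E y \<in> I" for y using bound[of y] unfolding I_def by auto
  interpret P: prob_space \<mu> by (rule mu_prob)
  have meas: "h \<in> borel_measurable \<mu>" if "continuous_on UNIV h" for h :: "real \<Rightarrow> real"
    using borel_measurable_continuous_onI[OF that] measurable_cong_sets[OF mu_borel refl] by blast
  define h1 where "h1 x = min 1 (max 0 (x - (b+R)) + max 0 (b - R - x))" for x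
  have h1c: "continuous_on UNIV h1" unfolding h1_def by (intro continuous_intros)
  have h1E: "h1 (E y) = 0" for y using EI[of y] unfolding h1_def I_def by auto
  have "((\<lambda>Y. (1 / Y) * integral {eta0..Y} (\<lambda>y. h1 (E y))) \<longlongrightarrow> integral\<^sup>L \<mu> h1) at_top"
    using mu_def[OF h1c] unfolding E_def .
  then have "((\<lambda>Y::real. 0) \<longlongrightarrow> integral\<^sup>L \<mu> h1) at_top" by (simp add: h1E)
  then have int_h1: "integral\<^sup>L \<mu> h1 = 0" by (simp add: tendsto_const_iff)
  have h1_int: "integrable \<mu> h1"
    by (rule P.integrable_const_bound[where B=1]) (auto simp: h1_def meas[OF h1c])
  have "AE x in \<mu>. h1 x = 0"
    using integral_nonneg_eq_0_iff_AE[OF h1_int] int_h1 by (simp add: h1_def)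
  then have AEI: "AE x in \<mu>. x \<in> I"
    by (rule AE_mp) (auto simp: h1_def I_def)
  define h2 where "h2 x = max (b-R) (min (b+R) x)" for x
  have h2c: "continuous_on UNIV h2" unfolding h2_def by (intro continuous_intros)
  have h2E: "h2 (E y) = E y" for y using EI[of y] unfolding h2_def I_def by auto
  have AE2: "AE x in \<mu>. h2 x = x" using AEI by (rule AE_mp) (auto simp: h2_def I_def)
  have h2_int: "integrable \<mu> h2"
    by (rule P.integrable_const_bound[where B="\<bar>b\<bar> + R"]) (use Rnn in \<open>auto simp: h2_def meas[OF h2c]\<close>)
  have id_int: "integrable \<mu> (\<lambda>x. x)"
    by (rule integrable_cong_AE_imp[OF h2_int _ AE2]) (simp add: meas continuous_on_id)
  have id_eq: "integral\<^sup>L \<mu> (\<lambda>x. x) = integral\<^sup>L \<mu> h2"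
    by (rule integral_cong_AE) (auto simp: meas h2c continuous_on_id AE2[THEN AE_mp] intro: AE_mp[OF AE2])
  have lim1: "((\<lambda>Y. (1 / Y) * integral {eta0..Y} E) \<longlongrightarrow> integral\<^sup>L \<mu> h2) at_top"
    using mu_def[OF h2c] unfolding E_def[symmetric] h2E .
  define F where "F = (\<lambda>q Y. (Re (A q) * sin (fst q * Y) + Im (A q) * cos (fst q * Y)) / fst q)"
  define G where "G = (\<lambda>Y. 2 * (\<Sum>q\<in>S. real (m (fst q) (snd q)) * (F q Y - F q eta0)))"
  define C where "C = 2 * (\<Sum>q\<in>S. real (m (fst q) (snd q)) * (2 * ((\<bar>Re (A q)\<bar> + \<bar>Im (A q)\<bar>) / \<bar>fst q\<bar>)))"
  have intE: "integral {eta0..Y} E = b * (Y - eta0) + G Y" if "eta0 \<le> Y" for Y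
  proof -
    have "(E has_integral (G Y + b * (Y - eta0))) {eta0..Y}"
      unfolding Eeq[abs_def] G_def
    proof (intro has_integral_add has_integral_mult_right has_integral_sum[OF finS])
      fix q assume "q \<in> S"
      show "((\<lambda>y. Re (A q * exp (\<i> * complex_of_real (fst q * y)))) has_integral (F q Y - F q eta0)) {eta0..Y}"
        unfolding F_def by (rule term_int[OF S0[OF \<open>q \<in> S\<close>] that])
    next
      show "((\<lambda>y. b) has_integral b * (Y - eta0)) {eta0..Y}"
        using has_integral_const_real[of b eta0 Y] that by (simp add: mult.commute)
    qed
    then show ?thesis by (simp add: integral_unique)
  qed
  have Fb: "\<bar>F q Y\<bar> \<le> (\<bar>Re (A q)\<bar> + \<bar>Im (A q)\<bar>) / \<bar>fst q\<bar>" for q Y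
  proof -
    have "\<bar>Re (A q) * sin (fst q * Y) + Im (A q) * cos (fst q * Y)\<bar> \<le> \<bar>Re (A q)\<bar> + \<bar>Im (A q)\<bar>"
    proof -
      have "\<bar>Re (A q) * sin (fst q * Y)\<bar> \<le> \<bar>Re (A q)\<bar>"
        by (simp add: abs_mult mult_left_le)
      moreover have "\<bar>Im (A q) * cos (fst q * Y)\<bar> \<le> \<bar>Im (A q)\<bar>"
        by (simp add: abs_mult mult_left_le)
      ultimately show ?thesis by linarith
    qed
    then show ?thesis unfolding F_def by (simp add: abs_divide divide_right_mono)
  qed
  have Gb: "\<bar>G Y\<bar> \<le> C" for Y
  proof -
    have "\<bar>\<Sum>q\<in>S. real (m (fst q) (snd q)) * (F q Y - F q eta0)\<bar> \<le> (\<Sum>q\<in>S. \<bar>real (m (fst q) (snd q)) * (F q Y - F q eta0)\<bar>)"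
      by (rule sum_abs)
    also have "\<dots> \<le> (\<Sum>q\<in>S. real (m (fst q) (snd q)) * (2 * ((\<bar>Re (A q)\<bar> + \<bar>Im (A q)\<bar>) / \<bar>fst q\<bar>)))"
    proof (rule sum_mono)
      fix q
      have "\<bar>F q Y - F q eta0\<bar> \<le> 2 * ((\<bar>Re (A q)\<bar> + \<bar>Im (A q)\<bar>) / \<bar>fst q\<bar>)"
        using Fb[of q Y] Fb[of q eta0] by linarith
      then show "\<bar>real (m (fst q) (snd q)) * (F q Y - F q eta0)\<bar> \<le> real (m (fst q) (snd q)) * (2 * ((\<bar>Re (A q)\<bar> + \<bar>Im (A q)\<bar>) / \<bar>fst q\<bar>))"
        unfolding abs_mult abs_of_nat by (intro mult_left_mono) auto
    qed
    finally show ?thesis unfolding G_def C_def by simp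
  qed
  have lim2: "((\<lambda>Y. (1 / Y) * integral {eta0..Y} E) \<longlongrightarrow> b) at_top"
  proof -
    have ev: "eventually (\<lambda>Y. (1 / Y) * integral {eta0..Y} E = b * (Y - eta0) / Y + G Y / Y) at_top"
      using eventually_ge_at_top[of eta0] by eventually_elim (simp add: intE add_divide_distrib diff_divide_distrib algebra_simps)
    have t1: "((\<lambda>Y. b * (Y - eta0) / Y) \<longlongrightarrow> b) at_top" by real_asymp
    have t2: "((\<lambda>Y. G Y / Y) \<longlongrightarrow> 0) at_top"
    proof (rule Lim_null_comparison)
      show "eventually (\<lambda>Y. norm (G Y / Y) \<le> C / Y) at_top"
        using eventually_gt_at_top[of 0]
        by eventually_elim (simp add: abs_divide divide_right_mono Gb)
      show "((\<lambda>Y. C / Y) \<longlongrightarrow> 0) at_top" by real_asymp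
    qed
    have "((\<lambda>Y. b * (Y - eta0) / Y + G Y / Y) \<longlongrightarrow> b + 0) at_top" by (intro tendsto_add t1 t2)
    then show ?thesis using ev by (simp add: tendsto_cong)
  qed
  have mean: "integral\<^sup>L \<mu> (\<lambda>x. x) = b"
    using tendsto_unique[OF trivial_limit_at_top_linorder lim1 lim2] id_eq by simp
  have part3: "ereal b - enn2ereal (rad_all m psi f eta) \<le> ereal x \<and> ereal x \<le> ereal b + enn2ereal (rad_all m psi f eta)"
    if "x \<in> I" for x
  proof -
    have "ennreal R \<le> rad_all m psi f eta"
    proof -
      have "ennreal R = 2 * (\<Sum>q\<in>Q. ennreal (w q))"
        unfolding Req using wnn by (simp add: ennreal_mult sum_ennreal sum_nonneg)
      also have "\<dots> = 2 * (\<Sum>\<^sub>\<infinity>q\<in>Q. ennreal (w q))" using finQ by simp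
      also have "\<dots> \<le> 2 * (\<Sum>\<^sub>\<infinity>q\<in>{(s,p). m s p \<noteq> 0}. ennreal (w q))"
        by (intro mult_left_mono infsum_mono_neutral nonneg_summable_on_complete) (auto simp: Q_def)
      also have "\<dots> = rad_all m psi f eta" unfolding rad_all_def w_def by (simp add: split_def)
      finally show ?thesis .
    qed
    then have le: "ereal R \<le> enn2ereal (rad_all m psi f eta)"
      using Rnn by (metis enn2ereal_ennreal less_eq_ennreal.rep_eq)
    show ?thesis
    proof (cases "enn2ereal (rad_all m psi f eta)")
      case (real r)
      then show ?thesis using le that unfolding I_def by auto
    qed (use le in auto)
  qed
  show ?thesis
    unfolding b_def[symmetric] R_def[symmetric] I_def[symmetric]
    using id_int mean AEI part3 by blast
qed

end
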